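(* Suppose $\nu:\mathcal{P}\to\mathcal{H}$ is pathwise differentiable at $P_0$ and $(r_n)_{n\ge1}$ is a nonnegative sequence. Fix $j\in\{1,2\}$ and, for each $n$, let $\beta_n\in\ell^2\cap[0,1]^{\mathbb{N}}$. If $\|\phi_n^{j,\beta_n}-\phi_0^{\beta_n}\|_{L^2(P_0;\mathcal{H})}=o_p(r_n)$, then $\|\mathcal{D}_n^{j,\beta_n}\|_{\mathcal{H}}=o_p(r_n/n^{1/2})$, where $\mathcal{D}_n^{j,\beta}=(P_n^j-P_0)(\phi_n^{j,\beta}-\phi_0^\beta)$.
   Context: Let $(\mathcal{Z},\mathbf{B})$ be a Polish space, $\mathcal{P}$ a model of distributions dominated by a $\sigma$-finite measure $\lambda$, $\mathcal{H}$ a real separable Hilbert space with orthonormal basis $(h_k)_{k\ge1}$ (padded with zeros if finite-dimensional). $\nu$ is pathwise differentiable at $P$ if there is a continuous linear $\dot{\nu}_P$ from the tangent space $\dot{\mathcal{P}}_P$ (closed linear span in $L^2(P)$ of scores $s$ of submodels $\{P_\epsilon\}\subset\mathcal{P}$ with $\|p_\epsilon^{1/2}-p^{1/2}-\epsilon sp^{1/2}/2\|_{L^2(\lambda)}=o(\epsilon)$) to $\mathcal{H}$ with $\|\nu(P_\epsilon)-\nu(P)-\epsilon\dot{\nu}_P(s)\|_{\mathcal{H}}=o(\epsilon)$ along every such submodel; $\dot{\nu}_P^*$ is its adjoint. For $\beta\in\ell^2\cap[0,1]^{\mathbb{N}}$, $\phi_P^\beta(z)=\sum_k\beta_k\dot{\nu}_P^*(h_k)(z)h_k$.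 $L^2(P;\mathcal{H})$: Bochner measurable $f$ with $\int\|f\|_{\mathcal{H}}^2dP<\infty$; $Qf=\int f\,dQ$. Cross-fitting: $P_0\in\mathcal{P}$, $n$ even, $Z_1,\dots,Z_n$ iid $P_0$; $\widehat{P}_n^1\in\mathcal{P}$ estimates $P_0$ from $Z_1,\dots,Z_{n/2}$, $P_n^1$ is the empirical distribution of $Z_{n/2+1},\dots,Z_n$; $\widehat{P}_n^2$ uses $Z_{n/2+1},\dots,Z_n$, $P_n^2$ is the empirical distribution of $Z_1,\dots,Z_{n/2}$. $\nu$ is assumed pathwise differentiable at each $\widehat{P}_n^j$; $\phi_n^{j,\beta}=\phi^\beta_{\widehat{P}_n^j}$, $\phi_0^\beta=\phi^\beta_{P_0}$. *)

theory Defs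
  imports "HOL-Probability.Probability"
begin

definition dens :: "'z measure \<Rightarrow> 'z measure \<Rightarrow> 'z \<Rightarrow> real" where
  "dens lam Q z = enn2real (RN_deriv lam Q z)"

definition L2sq :: "'z measure \<Rightarrow> ('z \<Rightarrow> real) \<Rightarrow> ennreal" where
  "L2sq P f = (\<integral>\<^sup>+ z. ennreal ((f z)\<^sup>2) \<partial>P)"

definition L2sqH :: "'z measure \<Rightarrow> ('z \<Rightarrow> 'h::real_normed_vector) \<Rightarrow> ennreal" where
  "L2sqH P f = (\<integral>\<^sup>+ z. ennreal ((norm (f z))\<^sup>2) \<partial>P)"

text \<open>s is the score of the submodel Pe (epsilon in [0,delta), Pe 0 = P, contained in the model M)
  in the quadratic-mean sense w.r.t. lam; o(epsilon) of the L2(lam) norm is written as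
  (norm)^2 <= c epsilon^2 eventually, for every c > 0.\<close>
definition is_score :: "'z measure \<Rightarrow> 'z measure set \<Rightarrow> 'z measure \<Rightarrow> (real \<Rightarrow> 'z measure)
    \<Rightarrow> ('z \<Rightarrow> real) \<Rightarrow> bool" where
  "is_score lam M P Pe s \<longleftrightarrow>
     Pe 0 = P \<and> (\<exists>\<delta>>0. \<forall>e\<in>{0..<\<delta>}. Pe e \<in> M) \<and>
     s \<in> borel_measurable P \<and> L2sq P s < \<infinity> \<and>
     (\<forall>c>0. eventually (\<lambda>e. (\<integral>\<^sup>+ z. ennreal ((sqrt (dens lam (Pe e) z) - sqrt (dens lam P z)
            - e * s z * sqrt (dens lam P z) / 2)\<^sup>2) \<partial>lam) \<le> ennreal (c * e\<^sup>2)) (at_right 0))"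

definition scores :: "'z measure \<Rightarrow> 'z measure set \<Rightarrow> 'z measure \<Rightarrow> ('z \<Rightarrow> real) set" where
  "scores lam M P = {s. \<exists>Pe. is_score lam M P Pe s}"

definition lin_span :: "('z \<Rightarrow> real) set \<Rightarrow> ('z \<Rightarrow> real) set" where
  "lin_span S = {f. \<exists>k c g. (\<forall>i<k. g i \<in> S) \<and> f = (\<lambda>z. \<Sum>i<(k::nat). (c i::real) * g i z)}"

definition tangent_space :: "'z measure \<Rightarrow> 'z measure set \<Rightarrow> 'z measure \<Rightarrow> ('z \<Rightarrow> real) set" where
  "tangent_space lam M P = {f. f \<in> borel_measurable P \<and> L2sq P f < \<infinity> \<and>
      (\<forall>e>0. \<exists>g\<in>lin_span (scores lam M P). L2sq P (\<lambda>z. f z - g z) < ennreal e)}"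

definition pw_diff :: "'z measure \<Rightarrow> 'z measure set \<Rightarrow> ('z measure \<Rightarrow> 'h::real_normed_vector)
    \<Rightarrow> 'z measure \<Rightarrow> (('z \<Rightarrow> real) \<Rightarrow> 'h) \<Rightarrow> bool" where
  "pw_diff lam M nu P D \<longleftrightarrow> P \<in> M \<and>
     (\<forall>f\<in>tangent_space lam M P. \<forall>g\<in>tangent_space lam M P. \<forall>a b.
        D (\<lambda>z. a * f z + b * g z) = a *\<^sub>R D f + b *\<^sub>R D g) \<and>
     (\<exists>C. \<forall>f\<in>tangent_space lam M P. norm (D f) \<le> C * sqrt (enn2real (L2sq P f))) \<and>
     (\<forall>Pe s. is_score lam M P Pe s \<longrightarrow>
        ((\<lambda>e. norm (nu (Pe e) - nu P - e *\<^sub>R D s) / e) \<longlongrightarrow> 0) (at_right 0))"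

definition is_adjoint :: "'z measure \<Rightarrow> 'z measure set \<Rightarrow> 'z measure \<Rightarrow> (('z \<Rightarrow> real) \<Rightarrow> 'h::real_inner)
    \<Rightarrow> ('h \<Rightarrow> 'z \<Rightarrow> real) \<Rightarrow> bool" where
  "is_adjoint lam M P D A \<longleftrightarrow> (\<forall>v. A v \<in> tangent_space lam M P) \<and>
     (\<forall>v. \<forall>s\<in>tangent_space lam M P. inner (D s) v = (\<integral>z. s z * A v z \<partial>P))"

definition phi_beta :: "(nat \<Rightarrow> 'h::real_normed_vector) \<Rightarrow> (nat \<Rightarrow> real) \<Rightarrow> ('h \<Rightarrow> 'z \<Rightarrow> real) \<Rightarrow> 'z \<Rightarrow> 'h" where
  "phi_beta h \<beta> A z = (if summable (\<lambda>k. (\<beta> k * A (h k) z) *\<^sub>R h k)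
      then (\<Sum>k. (\<beta> k * A (h k) z) *\<^sub>R h k) else 0)"

text \<open>Cross-fitting with n = 2m observations: the training half for fold j, given as a vector
  indexed by {..<m}, and the evaluation index set.\<close>
definition train :: "nat \<Rightarrow> nat \<Rightarrow> (nat \<Rightarrow> 'z) \<Rightarrow> (nat \<Rightarrow> 'z)" where
  "train m j \<omega> = (\<lambda>i. if i < m then \<omega> (if j = 1 then i else i + m) else undefined)"

definition evalset :: "nat \<Rightarrow> nat \<Rightarrow> nat set" where
  "evalset m j = (if j = 1 then {m..<2*m} else {..<m})"

definition emp_diff :: "'z measure \<Rightarrow> nat \<Rightarrow> nat \<Rightarrow> (nat \<Rightarrow> 'z) \<Rightarrow> ('z \<Rightarrow> 'h::{banach,second_countable_topology}) \<Rightarrow> 'h" where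
  "emp_diff P0 m j \<omega> f = (1 / real m) *\<^sub>R (\<Sum>i\<in>evalset m j. f (\<omega> i)) - (\<integral>z. f z \<partial>P0)"

end

theory Submission
  imports Defs
begin


lemma phi_meas:
  fixes a :: "nat \<Rightarrow> 'x \<Rightarrow> real" and h :: "nat \<Rightarrow> 'h::{banach,second_countable_topology}"
  assumes [measurable]: "\<And>k. a k \<in> borel_measurable N"
  shows "(\<lambda>p. if summable (\<lambda>k. (b k * a k p) *\<^sub>R h k) then (\<Sum>k. (b k * a k p) *\<^sub>R h k) else 0)
     \<in> borel_measurable N"
proof -
  have eq: "summable (\<lambda>k. (b k * a k p) *\<^sub>R h k) \<longleftrightarrow> Cauchy (\<lambda>n. \<Sum>k<n. (b k * a k p) *\<^sub>R h k)" for p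
    by (simp add: summable_iff_convergent Cauchy_convergent_iff)
  have [measurable]: "Measurable.pred N (\<lambda>p. Cauchy (\<lambda>n. \<Sum>k<n. (b k * a k p) *\<^sub>R h k))"
    unfolding pred_def by (rule sets_Collect_Cauchy) measurable
  show ?thesis unfolding eq by measurable
qed

lemma norm_add_sq: "norm (w + v :: 'a::real_inner)^2 = norm w^2 + 2 * inner w v + norm v^2"
  by (simp add: power2_norm_eq_inner inner_add inner_commute)

lemma le_1_sq: "(x::real) \<le> 1 + x^2"
proof (cases "x \<le> 1")
  case True then show ?thesis using zero_le_power2[of x] by linarith
next
  case False
  then have "0 \<le> x * (x - 1)" by (intro mult_nonneg_nonneg) auto
  then show ?thesis by (simp add: power2_eq_square algebra_simps)
qed

lemma sq_int_imp_int:
  fixes a :: "'z \<Rightarrow> 'h::{real_inner,banach,second_countable_topology}"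
  assumes "prob_space P" "a \<in> borel_measurable P" "integrable P (\<lambda>z. norm (a z)^2)"
  shows "integrable P a"
proof (rule Bochner_Integration.integrable_bound)
  interpret prob_space P by fact
  show "integrable P (\<lambda>z. 1 + norm (a z)^2)" using assms(3) by simp
  show "a \<in> borel_measurable P" by fact
  show "AE z in P. norm (a z) \<le> norm (1 + norm (a z)^2)"
  proof (rule AE_I2)
    fix z
    have "norm (a z) \<le> 1 + norm (a z)^2"
      by (rule le_1_sq)
    then show "norm (a z) \<le> norm (1 + norm (a z)^2)" by simp
  qed
qed

lemma var_id:
  fixes a :: "'z \<Rightarrow> 'h::{real_inner,banach,second_countable_topology}"
  assumes P: "prob_space P" and am: "a \<in> borel_measurable P" and ai: "integrable P (\<lambda>z. norm (a z)^2)"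
  and a0: "integral\<^sup>L P a = 0"
  shows "integrable P (\<lambda>z. norm (w + a z)^2)"
    "(\<integral>z. norm (w + a z)^2 \<partial>P) = norm w^2 + (\<integral>z. norm (a z)^2 \<partial>P)"
proof -
  interpret prob_space P by fact
  have ia: "integrable P a" using sq_int_imp_int[OF P am ai] .
  have e: "(\<lambda>z. norm (w + a z)^2) = (\<lambda>z. norm w^2 + 2 * inner w (a z) + norm (a z)^2)"
    by (simp add: norm_add_sq)
  show "integrable P (\<lambda>z. norm (w + a z)^2)" unfolding e using ia ai by auto
  have "(\<integral>z. norm w^2 + 2 * inner w (a z) + norm (a z)^2 \<partial>P)
      = (\<integral>z. norm w^2 + 2 * inner w (a z) \<partial>P) + (\<integral>z. norm (a z)^2 \<partial>P)"
    using ia ai by (intro Bochner_Integration.integral_add) auto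
  also have "(\<integral>z. norm w^2 + 2 * inner w (a z) \<partial>P) = norm w^2 + (\<integral>z. 2 * inner w (a z) \<partial>P)"
    using ia by (subst Bochner_Integration.integral_add) (auto simp: prob_space)
  also have "(\<integral>z. 2 * inner w (a z) \<partial>P) = 0"
    using ia a0 by simp
  finally show "(\<integral>z. norm (w + a z)^2 \<partial>P) = norm w^2 + (\<integral>z. norm (a z)^2 \<partial>P)"
    unfolding e by simp
qed

lemma sum_var:
  fixes a :: "'z \<Rightarrow> 'h::{real_inner,banach,second_countable_topology}"
  assumes P: "prob_space P" and am[measurable]: "a \<in> borel_measurable P"
    and ai: "integrable P (\<lambda>z. norm (a z)^2)" and a0: "integral\<^sup>L P a = 0"
    and J: "finite J"
  shows "(\<integral>\<^sup>+y. ennreal (norm (\<Sum>i\<in>J. a (y i))^2) \<partial>PiM J (\<lambda>_. P))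
      = of_nat (card J) * ennreal (\<integral>z. norm (a z)^2 \<partial>P)"
  using J
proof (induction J rule: finite_induct)
  case empty
  then show ?case by simp
next
  case (insert i J)
  interpret prob_space P by fact
  interpret PP: product_prob_space "\<lambda>_. P" by unfold_locales
  interpret PJ: prob_space "PiM J (\<lambda>_. P)" by (rule prob_space_PiM) (simp add: P)
  define V where "V = (\<integral>z. norm (a z)^2 \<partial>P)"
  have V0: "V \<ge> 0" unfolding V_def by simp
  have "(\<integral>\<^sup>+y. ennreal (norm (\<Sum>k\<in>insert i J. a (y k))^2) \<partial>PiM (insert i J) (\<lambda>_. P))
     = (\<integral>\<^sup>+x. (\<integral>\<^sup>+z. ennreal (norm (\<Sum>k\<in>insert i J. a ((x(i:=z)) k))^2) \<partial>P) \<partial>PiM J (\<lambda>_. P))"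
    by (rule PP.product_nn_integral_insert) (use insert in auto)
  also have "\<dots> = (\<integral>\<^sup>+x. ennreal (norm (\<Sum>k\<in>J. a (x k))^2) + ennreal V \<partial>PiM J (\<lambda>_. P))"
  proof (rule nn_integral_cong)
    fix x
    have s: "(\<Sum>k\<in>insert i J. a ((x(i:=z)) k)) = (\<Sum>k\<in>J. a (x k)) + a z" for z
    proof -
      have "(\<Sum>k\<in>J. a ((x(i:=z)) k)) = (\<Sum>k\<in>J. a (x k))"
        using insert by (intro sum.cong) auto
      then show ?thesis using insert by (simp add: add.commute)
    qed
    have "(\<integral>\<^sup>+z. ennreal (norm ((\<Sum>k\<in>J. a (x k)) + a z)^2) \<partial>P)
        = ennreal (\<integral>z. norm ((\<Sum>k\<in>J. a (x k)) + a z)^2 \<partial>P)"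
      by (rule nn_integral_eq_integral) (use var_id(1)[OF P am ai a0] in auto)
    also have "\<dots> = ennreal (norm (\<Sum>k\<in>J. a (x k))^2 + V)"
      using var_id(2)[OF P am ai a0] V_def by simp
    finally show "(\<integral>\<^sup>+z. ennreal (norm (\<Sum>k\<in>insert i J. a ((x(i:=z)) k))^2) \<partial>P)
        = ennreal (norm (\<Sum>k\<in>J. a (x k))^2) + ennreal V"
      unfolding s using V0 by (simp add: ennreal_plus)
  qed
  also have "\<dots> = (\<integral>\<^sup>+x. ennreal (norm (\<Sum>k\<in>J. a (x k))^2) \<partial>PiM J (\<lambda>_. P)) + ennreal V"
    by (subst nn_integral_add) (auto simp: PJ.emeasure_space_1)
  also have "\<dots> = of_nat (card (insert i J)) * ennreal V"
    using insert V_def by (simp add: distrib_right)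
  finally show ?case unfolding V_def .
qed



lemma mean_bound:
  fixes g :: "'z \<Rightarrow> 'h::{real_inner,banach,second_countable_topology}"
  assumes P: "prob_space P" and gm[measurable]: "g \<in> borel_measurable P"
    and gi: "integrable P (\<lambda>z. norm (g z)^2)"
    and J: "finite J" "card J = m" "m > 0"
  shows "(\<integral>\<^sup>+y. ennreal (norm ((1 / real m) *\<^sub>R (\<Sum>i\<in>J. g (y i)) - integral\<^sup>L P g)^2) \<partial>PiM J (\<lambda>_. P))
      \<le> ennreal ((\<integral>z. norm (g z)^2 \<partial>P) / m)"
proof -
  interpret prob_space P by fact
  define \<mu> where "\<mu> = integral\<^sup>L P g"
  define a where "a z = g z - \<mu>" for z
  have ig: "integrable P g" using sq_int_imp_int[OF P gm gi] .
  have am[measurable]: "a \<in> borel_measurable P" unfolding a_def by measurable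
  have ea: "(\<lambda>z. norm (a z)^2) = (\<lambda>z. norm (g z)^2 + 2 * inner (g z) (- \<mu>) + norm \<mu>^2)"
    unfolding a_def using norm_add_sq[of "g z" "- \<mu>" for z] by simp
  have ai: "integrable P (\<lambda>z. norm (a z)^2)" unfolding ea using ig gi by auto
  have a0: "integral\<^sup>L P a = 0" unfolding a_def \<mu>_def using ig by (simp add: prob_space)
  define V where "V = (\<integral>z. norm (a z)^2 \<partial>P)"
  have V0: "V \<ge> 0" unfolding V_def by simp
  have "(\<integral>z. norm (\<mu> + a z)^2 \<partial>P) = norm \<mu>^2 + V"
    using var_id(2)[OF P am ai a0] V_def by simp
  moreover have "\<mu> + a z = g z" for z unfolding a_def by auto
  ultimately have "(\<integral>z. norm (g z)^2 \<partial>P) = norm \<mu>^2 + V" by simp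
  then have VL: "V \<le> (\<integral>z. norm (g z)^2 \<partial>P)" using zero_le_power2[of "norm \<mu>"] by linarith
  have pw: "norm ((1 / real m) *\<^sub>R (\<Sum>i\<in>J. g (y i)) - \<mu>)^2 = (1 / real m)^2 * norm (\<Sum>i\<in>J. a (y i))^2" for y
  proof -
    have "(\<Sum>i\<in>J. a (y i)) = (\<Sum>i\<in>J. g (y i)) - real m *\<^sub>R \<mu>"
      unfolding a_def using J by (simp add: sum_subtractf sum_constant_scaleR)
    then have "(1 / real m) *\<^sub>R (\<Sum>i\<in>J. g (y i)) - \<mu> = (1 / real m) *\<^sub>R (\<Sum>i\<in>J. a (y i))"
      using J by (simp add: scaleR_diff_right)
    then show ?thesis by (simp add: power_divide field_simps)
  qed
  have "(\<integral>\<^sup>+y. ennreal (norm ((1 / real m) *\<^sub>R (\<Sum>i\<in>J. g (y i)) - \<mu>)^2) \<partial>PiM J (\<lambda>_. P))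
      = (\<integral>\<^sup>+y. ennreal ((1 / real m)^2) * ennreal (norm (\<Sum>i\<in>J. a (y i))^2) \<partial>PiM J (\<lambda>_. P))"
    unfolding pw by (simp add: ennreal_mult)
  also have "\<dots> = ennreal ((1 / real m)^2) * (of_nat m * ennreal V)"
    by (subst nn_integral_cmult) (auto simp: sum_var[OF P am ai a0 J(1)] J(2) V_def)
  also have "\<dots> = ennreal (V / m)"
    using J V0 by (simp add: ennreal_of_nat_eq_real_of_nat ennreal_mult[symmetric] power2_eq_square)
  also have "\<dots> \<le> ennreal ((\<integral>z. norm (g z)^2 \<partial>P) / m)"
    using VL J by (intro ennreal_leI divide_right_mono) auto
  finally show ?thesis unfolding \<mu>_def .
qed

lemma space_P_UNIV: "sets P = sets borel \<Longrightarrow> space P = UNIV"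
  using sets_eq_imp_space_eq[of P borel] by simp

lemma train_space: "sets P = sets borel \<Longrightarrow> train m j \<omega> \<in> space (PiM {..<m} (\<lambda>_. P))"
  by (auto simp: space_PiM space_P_UNIV PiE_def extensional_def train_def)

lemma train_meas:
  assumes "sets P = sets borel"
  shows "train m j \<in> measurable (PiM {..<2*m} (\<lambda>_. P)) (PiM {..<m} (\<lambda>_. P))"
proof -
  have "(\<lambda>\<omega> i. (\<lambda>i \<omega>. train m j \<omega> i) i \<omega>) \<in> measurable (PiM {..<2*m} (\<lambda>_. P)) (PiM {..<m} (\<lambda>_. P))"
  proof (rule measurable_PiM_single')
    fix i assume i: "i \<in> {..<m}"
    have e: "(\<lambda>\<omega>. train m j \<omega> i) = (\<lambda>\<omega>. \<omega> (if j = 1 then i else i + m))"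
      using i by (auto simp: train_def)
    have "(if j = 1 then i else i + m) \<in> {..<2*m}" using i by auto
    then show "(\<lambda>\<omega>. train m j \<omega> i) \<in> measurable (PiM {..<2*m} (\<lambda>_. P)) P"
      unfolding e by (rule measurable_component_singleton)
  next
    show "(\<lambda>\<omega> i. train m j \<omega> i) \<in> space (PiM {..<2*m} (\<lambda>_. P)) \<rightarrow> (\<Pi>\<^sub>E i\<in>{..<m}. space P)"
      using train_space[OF assms, of m j] by (auto simp: space_PiM)
  qed
  then show ?thesis by simp
qed

lemma emp_meas:
  fixes P :: "'z::topological_space measure" and F :: "(nat \<Rightarrow> 'z) \<Rightarrow> 'z \<Rightarrow> 'h::{real_inner,banach,second_countable_topology}"
  assumes P: "prob_space P" "sets P = sets borel"
    and Fm: "(\<lambda>(x,z). F x z) \<in> borel_measurable (PiM {..<m} (\<lambda>_. P) \<Otimes>\<^sub>M P)"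
  shows "(\<lambda>\<omega>. emp_diff P m j \<omega> (F (train m j \<omega>))) \<in> borel_measurable (PiM {..<2*m} (\<lambda>_. P))"
    "(\<lambda>\<omega>. L2sqH P (F (train m j \<omega>))) \<in> borel_measurable (PiM {..<2*m} (\<lambda>_. P))"
proof -
  interpret prob_space P by fact
  have tm: "train m j \<in> measurable (PiM {..<2*m} (\<lambda>_. P)) (PiM {..<m} (\<lambda>_. P))"
    by (rule train_meas) fact
  have ev: "evalset m j \<subseteq> {..<2*m}" by (auto simp: evalset_def)
  have t1: "(\<lambda>\<omega>. F (train m j \<omega>) (\<omega> i)) \<in> borel_measurable (PiM {..<2*m} (\<lambda>_. P))"
    if i: "i \<in> evalset m j" for i
  proof -
    have "(\<lambda>\<omega>. (train m j \<omega>, \<omega> i)) \<in> measurable (PiM {..<2*m} (\<lambda>_. P)) (PiM {..<m} (\<lambda>_. P) \<Otimes>\<^sub>M P)"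
      using i ev by (intro measurable_Pair tm measurable_component_singleton) auto
    from measurable_comp[OF this Fm] show ?thesis by (simp add: comp_def)
  qed
  have int: "(\<lambda>x. \<integral>z. F x z \<partial>P) \<in> borel_measurable (PiM {..<m} (\<lambda>_. P))"
    using borel_measurable_lebesgue_integral[of "\<lambda>x z. F x z"] Fm by simp
  have int2: "(\<lambda>\<omega>. \<integral>z. F (train m j \<omega>) z \<partial>P) \<in> borel_measurable (PiM {..<2*m} (\<lambda>_. P))"
    using measurable_comp[OF tm int] by (simp add: comp_def)
  show "(\<lambda>\<omega>. emp_diff P m j \<omega> (F (train m j \<omega>))) \<in> borel_measurable (PiM {..<2*m} (\<lambda>_. P))"
    unfolding emp_diff_def
    by (intro borel_measurable_diff borel_measurable_scaleR borel_measurable_const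
        borel_measurable_sum t1 int2)
  have Fm2: "(\<lambda>(x,z). ennreal (norm (F x z)^2)) \<in> borel_measurable (PiM {..<m} (\<lambda>_. P) \<Otimes>\<^sub>M P)"
  proof -
    have g: "(\<lambda>v. ennreal (norm (v::'h)^2)) \<in> borel_measurable borel" by measurable
    have "(\<lambda>p. ennreal (norm ((\<lambda>(x,z). F x z) p)^2)) \<in> borel_measurable (PiM {..<m} (\<lambda>_. P) \<Otimes>\<^sub>M P)"
      by (rule measurable_compose[OF Fm g])
    moreover have "(\<lambda>(x,z). ennreal (norm (F x z)^2)) = (\<lambda>p. ennreal (norm ((\<lambda>(x,z). F x z) p)^2))"
      by (rule ext) (simp add: case_prod_beta)
    ultimately show ?thesis by simp
  qed
  have L: "(\<lambda>x. L2sqH P (F x)) \<in> borel_measurable (PiM {..<m} (\<lambda>_. P))"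
    unfolding L2sqH_def using borel_measurable_nn_integral[of "\<lambda>x z. ennreal (norm (F x z)^2)"] Fm2 by simp
  show "(\<lambda>\<omega>. L2sqH P (F (train m j \<omega>))) \<in> borel_measurable (PiM {..<2*m} (\<lambda>_. P))"
    using measurable_comp[OF tm L] by (simp add: comp_def)
qed



lemma core:
  fixes P :: "'z::topological_space measure" and F :: "(nat \<Rightarrow> 'z) \<Rightarrow> 'z \<Rightarrow> 'h::{real_inner,banach,second_countable_topology}"
  assumes P: "prob_space P" "sets P = sets borel"
    and Fm: "(\<lambda>(x,z). F x z) \<in> borel_measurable (PiM {..<m} (\<lambda>_. P) \<Otimes>\<^sub>M P)"
    and m: "0 < m" and j: "j \<in> {1,2}" and c: "c \<ge> 0"
  shows "(\<integral>\<^sup>+\<omega>. indicator {\<omega>. L2sqH P (F (train m j \<omega>)) \<le> ennreal c} \<omega>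
            * ennreal (norm (emp_diff P m j \<omega> (F (train m j \<omega>)))^2) \<partial>PiM {..<2*m} (\<lambda>_. P))
         \<le> ennreal (c / m)"
proof -
  interpret prob_space P by fact
  interpret PP: product_prob_space "\<lambda>_. P" by unfold_locales
  define I where "I = (if j = 1 then {..<m} else {m..<2*m})"
  define J where "J = evalset m j"
  have IJ: "I \<inter> J = {}" "finite I" "finite J" "I \<union> J = {..<2*m}" "card J = m"
    using j by (auto simp: I_def J_def evalset_def)
  interpret PI: prob_space "PiM I (\<lambda>_. P)" by (rule prob_space_PiM) (simp add: P)
  have em[measurable]: "(\<lambda>\<omega>. emp_diff P m j \<omega> (F (train m j \<omega>))) \<in> borel_measurable (PiM {..<2*m} (\<lambda>_. P))"
   and Lm[measurable]: "(\<lambda>\<omega>. L2sqH P (F (train m j \<omega>))) \<in> borel_measurable (PiM {..<2*m} (\<lambda>_. P))"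
    using emp_meas[OF P Fm] by auto
  define f where "f \<omega> = indicator {\<omega>. L2sqH P (F (train m j \<omega>)) \<le> ennreal c} \<omega>
            * ennreal (norm (emp_diff P m j \<omega> (F (train m j \<omega>)))^2)" for \<omega>
  have f_alt: "f = (\<lambda>\<omega>. (if L2sqH P (F (train m j \<omega>)) \<le> ennreal c then 1 else 0)
            * ennreal (norm (emp_diff P m j \<omega> (F (train m j \<omega>)))^2))"
    unfolding f_def by (auto simp: indicator_def fun_eq_iff)
  have fm: "f \<in> borel_measurable (PiM (I \<union> J) (\<lambda>_. P))"
    unfolding f_alt IJ(4) by measurable
  have "integral\<^sup>N (PiM {..<2*m} (\<lambda>_. P)) f = integral\<^sup>N (PiM (I \<union> J) (\<lambda>_. P)) f"
    by (simp add: IJ(4))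
  also have "\<dots> = (\<integral>\<^sup>+x. (\<integral>\<^sup>+y. f (merge I J (x, y)) \<partial>PiM J (\<lambda>_. P)) \<partial>PiM I (\<lambda>_. P))"
    by (rule PP.product_nn_integral_fold[OF IJ(1,2,3) fm])
  also have "\<dots> \<le> (\<integral>\<^sup>+x. ennreal (c / m) \<partial>PiM I (\<lambda>_. P))"
  proof (rule nn_integral_mono)
    fix x :: "nat \<Rightarrow> 'z"
    define X where "X = train m j (merge I J (x, undefined))"
    have tX: "train m j (merge I J (x, y)) = X" for y :: "nat \<Rightarrow> 'z"
      unfolding X_def using j by (auto simp: train_def merge_def I_def fun_eq_iff)
    have mJ: "merge I J (x, y) i = y i" if "i \<in> J" for y :: "nat \<Rightarrow> 'z" and i
      using that IJ(1) by (auto simp: merge_def)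
    have fe: "f (merge I J (x, y)) = (if L2sqH P (F X) \<le> ennreal c then 1 else 0)
       * ennreal (norm ((1 / real m) *\<^sub>R (\<Sum>i\<in>J. F X (y i)) - integral\<^sup>L P (F X))^2)" for y :: "nat \<Rightarrow> 'z"
      unfolding f_alt tX emp_diff_def J_def[symmetric] using mJ by (simp cong: sum.cong)
    show "(\<integral>\<^sup>+y. f (merge I J (x, y)) \<partial>PiM J (\<lambda>_. P)) \<le> ennreal (c / m)"
    proof (cases "L2sqH P (F X) \<le> ennreal c")
      case False
      then show ?thesis unfolding fe by simp
    next
      case True
      have Xs: "X \<in> space (PiM {..<m} (\<lambda>_. P))" unfolding X_def by (rule train_space) fact
      have FXm: "F X \<in> borel_measurable P"
        using measurable_Pair2[OF Fm Xs] by simp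
      have Lfin: "(\<integral>\<^sup>+z. ennreal (norm (F X z)^2) \<partial>P) \<le> ennreal c"
        using True by (simp add: L2sqH_def)
      have FXi: "integrable P (\<lambda>z. norm (F X z)^2)"
        by (rule integrableI_bounded) (use FXm Lfin in \<open>auto simp: top_unique intro: le_less_trans\<close>)
      have Leq: "(\<integral>\<^sup>+z. ennreal (norm (F X z)^2) \<partial>P) = ennreal (\<integral>z. norm (F X z)^2 \<partial>P)"
        by (rule nn_integral_eq_integral) (use FXi in auto)
      have le_c: "(\<integral>z. norm (F X z)^2 \<partial>P) \<le> c"
        using Lfin c unfolding Leq by simp
      have "(\<integral>\<^sup>+y. f (merge I J (x, y)) \<partial>PiM J (\<lambda>_. P))
          = (\<integral>\<^sup>+y. ennreal (norm ((1 / real m) *\<^sub>R (\<Sum>i\<in>J. F X (y i)) - integral\<^sup>L P (F X))^2) \<partial>PiM J (\<lambda>_. P))"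
        unfolding fe using True by simp
      also have "\<dots> \<le> ennreal ((\<integral>z. norm (F X z)^2 \<partial>P) / m)"
        by (rule mean_bound[OF P(1) FXm FXi IJ(3,5) m])
      also have "\<dots> \<le> ennreal (c / m)"
        using le_c m by (intro ennreal_leI divide_right_mono) auto
      finally show ?thesis .
    qed
  qed
  also have "\<dots> = ennreal (c / m)"
    by (simp add: PI.emeasure_space_1)
  finally show ?thesis unfolding f_def .
qed



lemma markov_part:
  fixes P :: "'z::topological_space measure" and F :: "(nat \<Rightarrow> 'z) \<Rightarrow> 'z \<Rightarrow> 'h::{real_inner,banach,second_countable_topology}"
  assumes P: "prob_space P" "sets P = sets borel"
    and Fm: "(\<lambda>(x,z). F x z) \<in> borel_measurable (PiM {..<m} (\<lambda>_. P) \<Otimes>\<^sub>M P)"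
    and m: "0 < m" and j: "j \<in> {1,2}" and c: "c \<ge> 0" and t: "t \<ge> 0"
  defines "S \<equiv> {\<omega> \<in> space (PiM {..<2*m} (\<lambda>_. P)). norm (emp_diff P m j \<omega> (F (train m j \<omega>))) > t
                 \<and> \<not> L2sqH P (F (train m j \<omega>)) > ennreal c}"
  shows "S \<in> sets (PiM {..<2*m} (\<lambda>_. P))"
    "emeasure (PiM {..<2*m} (\<lambda>_. P)) S * ennreal (t^2) \<le> ennreal (c / m)"
    "c = 0 \<Longrightarrow> t = 0 \<Longrightarrow> emeasure (PiM {..<2*m} (\<lambda>_. P)) S = 0"
proof -
  let ?O = "PiM {..<2*m} (\<lambda>_. P)"
  have em[measurable]: "(\<lambda>\<omega>. emp_diff P m j \<omega> (F (train m j \<omega>))) \<in> borel_measurable ?O"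
   and Lm[measurable]: "(\<lambda>\<omega>. L2sqH P (F (train m j \<omega>))) \<in> borel_measurable ?O"
    using emp_meas[OF P Fm] by auto
  show Sm: "S \<in> sets ?O" unfolding S_def by measurable
  define f where "f \<omega> = indicator {\<omega>. L2sqH P (F (train m j \<omega>)) \<le> ennreal c} \<omega>
            * ennreal (norm (emp_diff P m j \<omega> (F (train m j \<omega>)))^2)" for \<omega>
  have f_alt: "f = (\<lambda>\<omega>. (if L2sqH P (F (train m j \<omega>)) \<le> ennreal c then 1 else 0)
            * ennreal (norm (emp_diff P m j \<omega> (F (train m j \<omega>)))^2))"
    unfolding f_def by (auto simp: indicator_def fun_eq_iff)
  have fm: "f \<in> borel_measurable ?O" unfolding f_alt by measurable
  have fint: "integral\<^sup>N ?O f \<le> ennreal (c / m)"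
    unfolding f_def by (rule core[OF P Fm m j c])
  have pw: "indicator S \<omega> * ennreal (t^2) \<le> f \<omega>" for \<omega>
  proof (cases "\<omega> \<in> S")
    case True
    then have a: "t < norm (emp_diff P m j \<omega> (F (train m j \<omega>)))"
      and b: "L2sqH P (F (train m j \<omega>)) \<le> ennreal c"
      unfolding S_def by (auto simp: not_less)
    have "t^2 \<le> norm (emp_diff P m j \<omega> (F (train m j \<omega>)))^2"
      using a t by (intro power_mono) auto
    then show ?thesis using True b unfolding f_def by (auto intro: ennreal_leI)
  qed simp
  have "emeasure ?O S * ennreal (t^2) = (\<integral>\<^sup>+\<omega>. indicator S \<omega> * ennreal (t^2) \<partial>?O)"
    using Sm by (simp add: nn_integral_multc)
  also have "\<dots> \<le> integral\<^sup>N ?O f"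
    by (rule nn_integral_mono) (rule pw)
  finally show "emeasure ?O S * ennreal (t^2) \<le> ennreal (c / m)" using fint by simp
  assume c0: "c = 0" and t0: "t = 0"
  have "integral\<^sup>N ?O f = 0" using fint c0 by simp
  then have "AE \<omega> in ?O. f \<omega> = 0" using nn_integral_0_iff_AE[OF fm] by simp
  then have "AE \<omega> in ?O. \<omega> \<notin> S"
  proof eventually_elim
    case (elim \<omega>)
    then show ?case unfolding f_def S_def using t0 by (auto simp: not_less)
  qed
  then show "emeasure ?O S = 0"
    using AE_iff_measurable[OF Sm, of "\<lambda>\<omega>. \<omega> \<notin> S"] Sm sets.sets_into_space by blast
qed



lemma final:
  fixes P :: "'z::topological_space measure" and F :: "nat \<Rightarrow> (nat \<Rightarrow> 'z) \<Rightarrow> 'z \<Rightarrow> 'h::{real_inner,banach,second_countable_topology}"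
  assumes P: "prob_space P" "sets P = sets borel"
    and Fm: "\<And>m. (\<lambda>(x,z). F m x z) \<in> borel_measurable (PiM {..<m} (\<lambda>_. P) \<Otimes>\<^sub>M P)"
    and r: "\<And>n. r n \<ge> 0" and j: "j \<in> {1,2}"
    and rate: "\<And>\<epsilon>. \<epsilon> > 0 \<Longrightarrow> (\<lambda>m. measure (PiM {..<2*m} (\<lambda>_. P))
        {\<omega> \<in> space (PiM {..<2*m} (\<lambda>_. P)). L2sqH P (F m (train m j \<omega>)) > ennreal ((\<epsilon> * r (2*m))\<^sup>2)}) \<longlonglongrightarrow> 0"
    and e: "\<epsilon> > 0"
  shows "(\<lambda>m. measure (PiM {..<2*m} (\<lambda>_. P))
        {\<omega> \<in> space (PiM {..<2*m} (\<lambda>_. P)). norm (emp_diff P m j \<omega> (F m (train m j \<omega>))) > \<epsilon> * r (2*m) / sqrt (real (2*m))})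
       \<longlonglongrightarrow> 0"
proof -
  define E where "E m = {\<omega> \<in> space (PiM {..<2*m} (\<lambda>_. P)). norm (emp_diff P m j \<omega> (F m (train m j \<omega>))) > \<epsilon> * r (2*m) / sqrt (real (2*m))}" for m
  define B where "B \<eta> m = {\<omega> \<in> space (PiM {..<2*m} (\<lambda>_. P)). L2sqH P (F m (train m j \<omega>)) > ennreal ((\<eta> * r (2*m))\<^sup>2)}" for \<eta> m
  have bound: "measure (PiM {..<2*m} (\<lambda>_. P)) (E m) \<le> measure (PiM {..<2*m} (\<lambda>_. P)) (B \<eta> m) + 2 * \<eta>^2 / \<epsilon>^2"
    if m: "0 < m" and \<eta>: "\<eta> > 0" for m \<eta>
  proof -
    let ?O = "PiM {..<2*m} (\<lambda>_. P)"
    interpret O: prob_space ?O by (rule prob_space_PiM) (simp add: P)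
    have em[measurable]: "(\<lambda>\<omega>. emp_diff P m j \<omega> (F m (train m j \<omega>))) \<in> borel_measurable ?O"
     and Lm[measurable]: "(\<lambda>\<omega>. L2sqH P (F m (train m j \<omega>))) \<in> borel_measurable ?O"
      using emp_meas[OF P Fm] by auto
    define t where "t = \<epsilon> * r (2*m) / sqrt (real (2*m))"
    define c where "c = (\<eta> * r (2*m))\<^sup>2"
    have t0: "t \<ge> 0" unfolding t_def using e r[of "2*m"] by auto
    have c0: "c \<ge> 0" unfolding c_def by auto
    define S where "S = {\<omega> \<in> space ?O. norm (emp_diff P m j \<omega> (F m (train m j \<omega>))) > t
                 \<and> \<not> L2sqH P (F m (train m j \<omega>)) > ennreal c}"
    note mp = markov_part[OF P Fm m j c0 t0, folded S_def]
    have Em: "E m \<in> sets ?O" unfolding E_def by measurable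
    have Bm: "B \<eta> m \<in> sets ?O" unfolding B_def by measurable
    have sub: "E m \<subseteq> B \<eta> m \<union> S"
      unfolding E_def B_def S_def t_def c_def by auto
    have "measure ?O (E m) \<le> measure ?O (B \<eta> m \<union> S)"
      using sub Bm mp(1) by (intro O.finite_measure_mono) auto
    also have "\<dots> \<le> measure ?O (B \<eta> m) + measure ?O S"
      using Bm mp(1) by (rule measure_Un_le)
    also have "measure ?O S \<le> 2 * \<eta>^2 / \<epsilon>^2"
    proof (cases "r (2*m) = 0")
      case True
      then have "c = 0" "t = 0" unfolding c_def t_def by auto
      then have "emeasure ?O S = 0" using mp(3) by auto
      then have "measure ?O S = 0" by (simp add: measure_def)
      then show ?thesis by simp
    next
      case False
      then have rp: "r (2*m) > 0" using r[of "2*m"] by linarith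
      have "emeasure ?O S * ennreal (t^2) \<le> ennreal (c / m)" by (rule mp(2))
      then have "ennreal (measure ?O S * t^2) \<le> ennreal (c / m)"
        by (simp add: O.emeasure_eq_measure ennreal_mult)
      then have le: "measure ?O S * t^2 \<le> c / m"
        using c0 m by (subst ennreal_le_iff[symmetric]) auto
      have t2: "t^2 = \<epsilon>^2 * r (2*m)^2 / (2 * m)"
        unfolding t_def by (simp add: power_divide power_mult_distrib)
      have "measure ?O S * (\<epsilon>^2 * r (2*m)^2) \<le> (2 * \<eta>^2) * r (2*m)^2"
        using le m unfolding t2 c_def by (simp add: field_simps power_mult_distrib)
      then have "measure ?O S * \<epsilon>^2 \<le> 2 * \<eta>^2"
        using rp by (simp add: mult.assoc[symmetric])
      then show ?thesis using e by (simp add: field_simps)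
    qed
    finally show ?thesis by simp
  qed
  have "(\<lambda>m. measure (PiM {..<2*m} (\<lambda>_. P)) (E m)) \<longlonglongrightarrow> 0"
  proof (rule LIMSEQ_I)
    fix \<delta> :: real assume d: "\<delta> > 0"
    define \<eta> where "\<eta> = \<epsilon> * sqrt \<delta> / 2"
    have \<eta>: "\<eta> > 0" unfolding \<eta>_def using e d by auto
    have eq: "2 * \<eta>^2 / \<epsilon>^2 = \<delta> / 2"
      unfolding \<eta>_def using e d by (simp add: power_divide power_mult_distrib)
    from LIMSEQ_D[OF rate[OF \<eta>], of "\<delta>/2"] d obtain N where
      N: "\<And>n. n \<ge> N \<Longrightarrow> norm (measure (PiM {..<2*n} (\<lambda>_. P)) (B \<eta> n) - 0) < \<delta>/2"
      unfolding B_def by auto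
    show "\<exists>no. \<forall>n\<ge>no. norm (measure (PiM {..<2*n} (\<lambda>_. P)) (E n) - 0) < \<delta>"
    proof (intro exI allI impI)
      fix n assume n: "n \<ge> Suc N"
      have "measure (PiM {..<2*n} (\<lambda>_. P)) (E n) \<le> measure (PiM {..<2*n} (\<lambda>_. P)) (B \<eta> n) + \<delta>/2"
        using bound[of n \<eta>] n \<eta> eq by auto
      moreover have "measure (PiM {..<2*n} (\<lambda>_. P)) (B \<eta> n) < \<delta>/2" using N[of n] n by auto
      ultimately show "norm (measure (PiM {..<2*n} (\<lambda>_. P)) (E n) - 0) < \<delta>" by auto
    qed
  qed
  then show ?thesis unfolding E_def .
qed

theorem lemma4:
  fixes lam :: "'z::polish_space measure"
    and M :: "'z measure set"
    and nu :: "'z measure \<Rightarrow> 'h::{real_inner, banach, second_countable_topology}"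
    and h :: "nat \<Rightarrow> 'h"
    and P0 :: "'z measure"
    and D0 :: "('z \<Rightarrow> real) \<Rightarrow> 'h" and A0 :: "'h \<Rightarrow> 'z \<Rightarrow> real"
    and est :: "nat \<Rightarrow> (nat \<Rightarrow> 'z) \<Rightarrow> 'z measure"
    and Dn :: "nat \<Rightarrow> (nat \<Rightarrow> 'z) \<Rightarrow> ('z \<Rightarrow> real) \<Rightarrow> 'h"
    and An :: "nat \<Rightarrow> (nat \<Rightarrow> 'z) \<Rightarrow> 'h \<Rightarrow> 'z \<Rightarrow> real"
    and r :: "nat \<Rightarrow> real"
    and \<beta> :: "nat \<Rightarrow> nat \<Rightarrow> real"
    and j :: nat
  assumes lam: "sigma_finite_measure lam" "sets lam = sets borel"
    and model: "\<And>P. P \<in> M \<Longrightarrow> prob_space P \<and> sets P = sets borel \<and> absolutely_continuous lam P"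
    and onb: "\<And>k. h k = 0 \<or> norm (h k) = 1"
      "\<And>k l. k \<noteq> l \<Longrightarrow> inner (h k) (h l) = 0"
      "\<And>k. h k = 0 \<Longrightarrow> h (Suc k) = 0"
      "\<And>x. (\<lambda>k. inner x (h k) *\<^sub>R h k) sums x"
    and P0: "P0 \<in> M" "pw_diff lam M nu P0 D0" "is_adjoint lam M P0 D0 A0"
    and est: "\<And>m x. x \<in> space (PiM {..<m} (\<lambda>_. P0)) \<Longrightarrow>
        est (2*m) x \<in> M \<and> pw_diff lam M nu (est (2*m) x) (Dn (2*m) x)
        \<and> is_adjoint lam M (est (2*m) x) (Dn (2*m) x) (An (2*m) x)"
    and est_meas: "\<And>m k. (\<lambda>(x, z). An (2*m) x (h k) z)
        \<in> borel_measurable (PiM {..<m} (\<lambda>_. P0) \<Otimes>\<^sub>M P0)"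
    and r: "\<And>n. r n \<ge> 0"
    and beta: "\<And>n k. 0 \<le> \<beta> n k \<and> \<beta> n k \<le> 1" "\<And>n. summable (\<lambda>k. (\<beta> n k)\<^sup>2)"
    and j: "j \<in> {1, 2}"
    and rate: "\<And>\<epsilon>. \<epsilon> > 0 \<Longrightarrow>
        (\<lambda>m. measure (PiM {..<2*m} (\<lambda>_. P0))
           {\<omega> \<in> space (PiM {..<2*m} (\<lambda>_. P0)).
              L2sqH P0 (\<lambda>z. phi_beta h (\<beta> (2*m)) (An (2*m) (train m j \<omega>)) z
                            - phi_beta h (\<beta> (2*m)) A0 z) > ennreal ((\<epsilon> * r (2*m))\<^sup>2)})
        \<longlonglongrightarrow> 0"
  shows "\<And>\<epsilon>. \<epsilon> > 0 \<Longrightarrow>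
        (\<lambda>m. measure (PiM {..<2*m} (\<lambda>_. P0))
           {\<omega> \<in> space (PiM {..<2*m} (\<lambda>_. P0)).
              norm (emp_diff P0 m j \<omega> (\<lambda>z. phi_beta h (\<beta> (2*m)) (An (2*m) (train m j \<omega>)) z
                            - phi_beta h (\<beta> (2*m)) A0 z)) > \<epsilon> * r (2*m) / sqrt (real (2*m))})
        \<longlonglongrightarrow> 0"
  proof -
  have P0p: "prob_space P0" "sets P0 = sets borel" using model[OF P0(1)] by auto
  have A0m: "A0 v \<in> borel_measurable P0" for v
    using P0(3) unfolding is_adjoint_def tangent_space_def by auto
  have Fm: "(\<lambda>(x,z). phi_beta h (\<beta> (2*m)) (An (2*m) x) z - phi_beta h (\<beta> (2*m)) A0 z)
      \<in> borel_measurable (PiM {..<m} (\<lambda>_. P0) \<Otimes>\<^sub>M P0)" for m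
  proof -
    let ?N = "PiM {..<m} (\<lambda>_. P0) \<Otimes>\<^sub>M P0"
    have a1: "(\<lambda>p. An (2*m) (fst p) (h k) (snd p)) \<in> borel_measurable ?N" for k
      using est_meas[of m k] by (simp add: case_prod_beta)
    have a2: "(\<lambda>p. A0 (h k) (snd p)) \<in> borel_measurable ?N" for k
      by (rule measurable_compose[OF measurable_snd A0m])
    have m1: "(\<lambda>p. phi_beta h (\<beta> (2*m)) (An (2*m) (fst p)) (snd p)) \<in> borel_measurable ?N"
      unfolding phi_beta_def by (rule phi_meas[OF a1])
    have m2: "(\<lambda>p. phi_beta h (\<beta> (2*m)) A0 (snd p)) \<in> borel_measurable ?N"
      unfolding phi_beta_def by (rule phi_meas[OF a2])
    have "(\<lambda>p. phi_beta h (\<beta> (2*m)) (An (2*m) (fst p)) (snd p) - phi_beta h (\<beta> (2*m)) A0 (snd p))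
       \<in> borel_measurable ?N" using m1 m2 by (rule borel_measurable_diff)
    then show ?thesis by (simp add: case_prod_beta)
  qed
  fix \<epsilon> :: real assume e: "\<epsilon> > 0"
  show "(\<lambda>m. measure (PiM {..<2*m} (\<lambda>_. P0))
           {\<omega> \<in> space (PiM {..<2*m} (\<lambda>_. P0)).
              norm (emp_diff P0 m j \<omega> (\<lambda>z. phi_beta h (\<beta> (2*m)) (An (2*m) (train m j \<omega>)) z
                            - phi_beta h (\<beta> (2*m)) A0 z)) > \<epsilon> * r (2*m) / sqrt (real (2*m))})
        \<longlonglongrightarrow> 0"
    by (rule final[where F="\<lambda>m x z. phi_beta h (\<beta> (2*m)) (An (2*m) x) z - phi_beta h (\<beta> (2*m)) A0 z",
          OF P0p Fm r j rate e])
qed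

end
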